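(* Let $\mathbb{F}$ be any field and let $C \subseteq \mathbb{F}^n$ be a subspace that is $\alpha$-non-overlapping for some $\alpha \ge 1$. Then every $M \in C \otimes C$ of rank at least $2$ satisfies $\|M\|_0 \ge \alpha \cdot d(C)^2$.
   Context: $\|\cdot\|_0$ counts nonzero entries. For a subspace $C \ne \{0\}$, $d(C) := \min_{u \in C\setminus\{0\}}\|u\|_0$ is its minimum distance. For subspaces $U \subseteq \mathbb{F}^n$, $V \subseteq \mathbb{F}^m$, $U \otimes V$ is the space of matrices $M \in \mathbb{F}^{n\times m}$ all of whose columns lie in $U$ and all of whose rows lie in $V$. A subspace $C\subseteq \mathbb{F}^n$ is $\alpha$-non-overlapping ($\alpha\ge 1$) if for any $u, v \in C$ linearly independent over $\mathbb{F}$, $|\mathrm{supp}(u)\cup\mathrm{supp}(v)| \ge \alpha \cdot d(C)$, where $\mathrm{supp}(u)$ is the set of nonzero coordinates of $u$. *)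

theory Defs
  imports "Jordan_Normal_Form.DL_Rank"
begin

definition supp_vec :: "'a::zero vec \<Rightarrow> nat set" where
  "supp_vec u = {i. i < dim_vec u \<and> u $ i \<noteq> 0}"

definition hw :: "'a::zero vec \<Rightarrow> nat" where
  "hw u = card (supp_vec u)"

definition hw_mat :: "'a::zero mat \<Rightarrow> nat" where
  "hw_mat M = card {(i, j). i < dim_row M \<and> j < dim_col M \<and> M $$ (i, j) \<noteq> 0}"

text \<open>Minimum distance of a subspace C of F^n (meaningful for C \<noteq> {0}).\<close>
definition min_dist :: "nat \<Rightarrow> 'a::zero vec set \<Rightarrow> nat" where
  "min_dist n C = Min {hw u | u. u \<in> C \<and> u \<noteq> 0\<^sub>v n}"

definition lin_indep2 :: "nat \<Rightarrow> 'a::field vec \<Rightarrow> 'a vec \<Rightarrow> bool" where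
  "lin_indep2 n u v \<longleftrightarrow> \<not> (\<exists>a b. (a, b) \<noteq> (0, 0) \<and> a \<cdot>\<^sub>v u + b \<cdot>\<^sub>v v = 0\<^sub>v n)"

definition non_overlapping :: "nat \<Rightarrow> real \<Rightarrow> 'a::field vec set \<Rightarrow> bool" where
  "non_overlapping n \<alpha> C \<longleftrightarrow> \<alpha> \<ge> 1 \<and>
     (\<forall>u\<in>C. \<forall>v\<in>C. lin_indep2 n u v \<longrightarrow>
        real (card (supp_vec u \<union> supp_vec v)) \<ge> \<alpha> * real (min_dist n C))"

definition tensor_code :: "nat \<Rightarrow> nat \<Rightarrow> 'a vec set \<Rightarrow> 'a vec set \<Rightarrow> 'a mat set" where
  "tensor_code n m U V = {M \<in> carrier_mat n m. (\<forall>j<m. col M j \<in> U) \<and> (\<forall>i<n. row M i \<in> V)}"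

end

theory Submission
  imports Defs
begin

lemma rank_two_cols:
  fixes M :: "'a::field mat"
  assumes M: "M \<in> carrier_mat n n" and r: "vec_space.rank n M \<ge> 2"
  shows "\<exists>j1<n. \<exists>j2<n. lin_indep2 n (col M j1) (col M j2)"
proof (rule ccontr)
  assume H: "\<not> ?thesis"
  have "vec_space.rank n M \<le> 1"
  proof (cases "\<exists>j0<n. col M j0 \<noteq> 0\<^sub>v n")
    case True
    then obtain j0 where j0: "j0 < n" "col M j0 \<noteq> 0\<^sub>v n" by blast
    define c0 where "c0 = col M j0"
    have c0d: "c0 \<in> carrier_vec n" using M j0 unfolding c0_def by auto
    have ex: "\<exists>k. col M j = k \<cdot>\<^sub>v c0" if j: "j < n" for j
    proof -
      from H j j0 have "\<not> lin_indep2 n c0 (col M j)" unfolding c0_def by blast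
      then obtain a b where ab: "(a, b) \<noteq> (0, 0)" "a \<cdot>\<^sub>v c0 + b \<cdot>\<^sub>v col M j = 0\<^sub>v n"
        unfolding lin_indep2_def by blast
      have cj: "col M j \<in> carrier_vec n" using M j by auto
      have b: "b \<noteq> 0"
      proof
        assume "b = 0"
        have z: "0 \<cdot>\<^sub>v col M j = 0\<^sub>v n" by (rule eq_vecI) (use cj M in auto)
        from \<open>b = 0\<close> have a: "a \<noteq> 0" using ab by auto
        have e: "a \<cdot>\<^sub>v c0 = 0\<^sub>v n" using ab(2) \<open>b = 0\<close> z c0d by simp
        have "c0 = 0\<^sub>v n"
        proof (rule eq_vecI)
          fix i assume "i < dim_vec (0\<^sub>v n :: 'a vec)"
          then have i: "i < n" by simp
          have "(a \<cdot>\<^sub>v c0) $ i = 0" using e i by simp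
          then show "c0 $ i = 0\<^sub>v n $ i" using a i c0d by simp
        qed (use c0d in auto)
        then show False using j0 c0_def by simp
      qed
      have "col M j = (- a / b) \<cdot>\<^sub>v c0"
      proof (rule eq_vecI)
        fix i assume "i < dim_vec ((- a / b) \<cdot>\<^sub>v c0)"
        then have i: "i < n" using c0d by simp
        have "(a \<cdot>\<^sub>v c0 + b \<cdot>\<^sub>v col M j) $ i = 0" using ab(2) i by simp
        then have "a * c0 $ i + b * col M j $ i = 0" using i c0d cj M by simp
        then show "col M j $ i = ((- a / b) \<cdot>\<^sub>v c0) $ i" using i c0d b
          by (simp add: field_simps) (metis add.commute add_eq_0_iff mult.commute)
      qed (use c0d cj M in auto)
      then show ?thesis by blast
    qed
    define g where "g j = (SOME k. col M j = k \<cdot>\<^sub>v c0)" for j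
    have g: "col M j = g j \<cdot>\<^sub>v c0" if "j < n" for j
      using someI_ex[OF ex[OF that]] unfolding g_def by blast
    show ?thesis
    proof (rule vec_space.rank_le_1_product_entries[of M n n "\<lambda>r. c0 $ r" g])
      show "M \<in> carrier_mat n n" by fact
      fix r c assume rc: "r < dim_row M" "c < dim_col M"
      then have "M $$ (r, c) = col M c $ r" using M by simp
      also have "\<dots> = (g c \<cdot>\<^sub>v c0) $ r" using g rc M by simp
      also have "\<dots> = c0 $ r * g c" using rc M c0d by simp
      finally show "M $$ (r, c) = c0 $ r * g c" .
    qed
  next
    case False
    show ?thesis
    proof (rule vec_space.rank_le_1_product_entries[of M n n "\<lambda>r. 0" "\<lambda>c. 0"])
      show "M \<in> carrier_mat n n" by fact
      fix r c assume rc: "r < dim_row M" "c < dim_col M"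
      then have "M $$ (r, c) = col M c $ r" using M by simp
      also have "\<dots> = 0" using False rc M by auto
      finally show "M $$ (r, c) = 0 * 0" by simp
    qed
  qed
  with r show False by simp
qed

theorem lemma2p5:
  fixes C :: "'a::field vec set" and n :: nat and \<alpha> :: real and M :: "'a mat"
  assumes "VectorSpace.subspace class_ring C (module_vec TYPE('a) n)"
    and "non_overlapping n \<alpha> C"
    and "M \<in> tensor_code n n C C"
    and "vec_space.rank n M \<ge> 2"
  shows "real (hw_mat M) \<ge> \<alpha> * real (min_dist n C) ^ 2"
proof -
  have Cc: "C \<subseteq> carrier_vec n" using assms(1)
    unfolding VectorSpace.subspace_def submodule_def by (simp add: module_vec_def)
  have M: "M \<in> carrier_mat n n" and colC: "\<And>j. j < n \<Longrightarrow> col M j \<in> C"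
    and rowC: "\<And>i. i < n \<Longrightarrow> row M i \<in> C"
    using assms(3) unfolding tensor_code_def by auto
  obtain j1 j2 where j: "j1 < n" "j2 < n" and li: "lin_indep2 n (col M j1) (col M j2)"
    using rank_two_cols[OF M assms(4)] by blast
  define d where "d = min_dist n C"
  define S where "S = supp_vec (col M j1) \<union> supp_vec (col M j2)"
  have al: "real (card S) \<ge> \<alpha> * real d"
    using assms(2) colC[OF j(1)] colC[OF j(2)] li unfolding non_overlapping_def S_def d_def by blast
  have a1: "\<alpha> \<ge> 1" using assms(2) unfolding non_overlapping_def by simp
  have Sn: "S \<subseteq> {..<n}" using M j unfolding S_def supp_vec_def by auto
  have hwle: "hw u \<le> n" if "u \<in> carrier_vec n" for u :: "'a vec"
  proof -
    have "supp_vec u \<subseteq> {..<n}" using that unfolding supp_vec_def by auto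
    then show ?thesis unfolding hw_def using card_mono[of "{..<n}"] by fastforce
  qed
  have fin: "finite {hw u | u. u \<in> C \<and> u \<noteq> 0\<^sub>v n}"
    by (rule finite_subset[of _ "{..n}"]) (use hwle Cc in auto)
  have rowd: "card (supp_vec (row M i)) \<ge> d" if i: "i \<in> S" for i
  proof -
    have iN: "i < n" using Sn i by auto
    have "row M i \<noteq> 0\<^sub>v n"
    proof
      assume z: "row M i = 0\<^sub>v n"
      have "M $$ (i, j1) = 0" "M $$ (i, j2) = 0"
        using arg_cong[OF z, of "\<lambda>v. v $ j1"] arg_cong[OF z, of "\<lambda>v. v $ j2"] iN j M by auto
      then show False using i iN j M unfolding S_def supp_vec_def by auto
    qed
    then have "hw (row M i) \<in> {hw u | u. u \<in> C \<and> u \<noteq> 0\<^sub>v n}" using rowC[OF iN] by blast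
    then show ?thesis using Min_le[OF fin] unfolding d_def min_dist_def hw_def by auto
  qed
  define T where "T = {(i, j). i < dim_row M \<and> j < dim_col M \<and> M $$ (i, j) \<noteq> 0}"
  have sub: "Sigma S (\<lambda>i. supp_vec (row M i)) \<subseteq> T"
    using Sn M unfolding T_def supp_vec_def by auto
  have finT: "finite T"
    by (rule finite_subset[of _ "{..<dim_row M} \<times> {..<dim_col M}"]) (auto simp: T_def)
  have finS: "finite S" using Sn finite_subset by blast
  have "card S * d \<le> (\<Sum>i\<in>S. card (supp_vec (row M i)))"
    using sum_mono[of S "\<lambda>_. d", OF rowd] by simp
  also have "\<dots> = card (Sigma S (\<lambda>i. supp_vec (row M i)))"
    by (rule card_SigmaI[symmetric]) (use finS in \<open>auto simp: supp_vec_def\<close>)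
  also have "\<dots> \<le> card T" using card_mono[OF finT sub] .
  finally have k: "card S * d \<le> hw_mat M" unfolding hw_mat_def T_def .
  have "\<alpha> * real d ^ 2 = (\<alpha> * real d) * real d" by (simp add: power2_eq_square)
  also have "\<dots> \<le> real (card S) * real d" using al by (simp add: mult_right_mono)
  also have "\<dots> \<le> real (hw_mat M)" using k by (metis of_nat_le_iff of_nat_mult)
  finally show ?thesis unfolding d_def .
qed

end
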